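(* The logic $\mathsf{Box}=\mathsf{wPL}\oplus\mathsf{bw}_2\oplus(\neg p\vee\neg\neg p)$ equals $\mathrm{Log}(\{S_n:n\in\omega, n\ge 2\})$.
   Context: $\mathsf{wPL}=\mathsf{IPC}\oplus(q\to p)\vee(((p\to q)\to p)\to p)$. $\mathsf{bw}_2=\bigvee_{i=0}^{2}\big(p_i\to\bigvee_{j\ne i}p_j\big)$ is the bounded width 2 axiom (its rooted frames have no 3-element antichains). For $n\ge2$, $S_n$ is the finite poset consisting of a bottom point $\rho$, then $n-1$ layers $L_{n-2},\dots,L_0$ (from bottom to top) each consisting of two incomparable points, and a top point $\tau$; the order is: $\rho$ below everything, every point of $L_{j+1}$ below every point of $L_j$, and every point below $\tau$. ($S_n$ is the underlying frame of the model $N^{n-2}_n$ with a maximal point added.) $\mathrm{Log}(\mathbf K)$ is the set of formulas valid on all posets of $\mathbf K$. *)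

theory Defs
  imports Main
begin

datatype form = Var nat | Bot | And form form | Or form form | Imp form form

definition Neg :: "form \<Rightarrow> form" where "Neg A = Imp A Bot"

fun subst :: "(nat \<Rightarrow> form) \<Rightarrow> form \<Rightarrow> form" where
  "subst s (Var n) = s n"
| "subst s Bot = Bot"
| "subst s (And A B) = And (subst s A) (subst s B)"
| "subst s (Or A B) = Or (subst s A) (subst s B)"
| "subst s (Imp A B) = Imp (subst s A) (subst s B)"

inductive ipc_axiom :: "form \<Rightarrow> bool" where
  "ipc_axiom (Imp A (Imp B A))"
| "ipc_axiom (Imp (Imp A (Imp B C)) (Imp (Imp A B) (Imp A C)))"
| "ipc_axiom (Imp (And A B) A)"
| "ipc_axiom (Imp (And A B) B)"
| "ipc_axiom (Imp A (Imp B (And A B)))"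
| "ipc_axiom (Imp A (Or A B))"
| "ipc_axiom (Imp B (Or A B))"
| "ipc_axiom (Imp (Imp A C) (Imp (Imp B C) (Imp (Or A B) C)))"
| "ipc_axiom (Imp Bot A)"

inductive in_ext :: "form set \<Rightarrow> form \<Rightarrow> bool" for G :: "form set" where
  ax: "ipc_axiom A \<Longrightarrow> in_ext G A"
| hyp: "A \<in> G \<Longrightarrow> in_ext G (subst s A)"
| mp: "in_ext G (Imp A B) \<Longrightarrow> in_ext G A \<Longrightarrow> in_ext G B"

definition ext_logic :: "form set \<Rightarrow> form set" where
  "ext_logic G = {A. in_ext G A}"

definition wPL_ax :: form where
  "wPL_ax = Or (Imp (Var 1) (Var 0)) (Imp (Imp (Imp (Var 0) (Var 1)) (Var 0)) (Var 0))"

definition bw2_ax :: form where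
  "bw2_ax = Or (Imp (Var 0) (Or (Var 1) (Var 2)))
              (Or (Imp (Var 1) (Or (Var 0) (Var 2)))
                  (Imp (Var 2) (Or (Var 0) (Var 1))))"

definition wem_ax :: form where
  "wem_ax = Or (Neg (Var 0)) (Neg (Neg (Var 0)))"

definition Box_logic :: "form set" where
  "Box_logic = ext_logic {wPL_ax, bw2_ax, wem_ax}"

fun forces :: "'a set \<Rightarrow> ('a \<Rightarrow> 'a \<Rightarrow> bool) \<Rightarrow> (nat \<Rightarrow> 'a set) \<Rightarrow> 'a \<Rightarrow> form \<Rightarrow> bool" where
  "forces W R V w (Var n) = (w \<in> V n)"
| "forces W R V w Bot = False"
| "forces W R V w (And A B) = (forces W R V w A \<and> forces W R V w B)"
| "forces W R V w (Or A B) = (forces W R V w A \<or> forces W R V w B)"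
| "forces W R V w (Imp A B) =
     (\<forall>v\<in>W. R w v \<longrightarrow> forces W R V v A \<longrightarrow> forces W R V v B)"

definition upset :: "'a set \<Rightarrow> ('a \<Rightarrow> 'a \<Rightarrow> bool) \<Rightarrow> 'a set \<Rightarrow> bool" where
  "upset W R U \<longleftrightarrow> U \<subseteq> W \<and> (\<forall>u\<in>U. \<forall>v\<in>W. R u v \<longrightarrow> v \<in> U)"

definition valid_on :: "'a set \<Rightarrow> ('a \<Rightarrow> 'a \<Rightarrow> bool) \<Rightarrow> form \<Rightarrow> bool" where
  "valid_on W R A \<longleftrightarrow>
     (\<forall>V. (\<forall>n. upset W R (V n)) \<longrightarrow> (\<forall>w\<in>W. forces W R V w A))"

text \<open>Points: bottom rho, layer points Lay j b (layer L_j, j = 0..n-2, two points each),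
  top tau.  L_{j+1} lies below L_j.\<close>
datatype spt = Rho | Lay nat bool | Tau

definition S_carrier :: "nat \<Rightarrow> spt set" where
  "S_carrier n = {Rho, Tau} \<union> {Lay j b | j b. j < n - 1}"

fun S_le :: "spt \<Rightarrow> spt \<Rightarrow> bool" where
  "S_le Rho _ = True"
| "S_le _ Tau = True"
| "S_le (Lay j a) (Lay i b) = ((j = i \<and> a = b) \<or> i < j)"
| "S_le _ _ = False"

definition Log_S :: "form set" where
  "Log_S = {A. \<forall>n\<ge>2. valid_on (S_carrier n) S_le A}"

end

theory Submission
  imports Defs
begin

section \<open>Soundness\<close>

lemma S_le_trans: "S_le x y \<Longrightarrow> S_le y z \<Longrightarrow> S_le x z"
  by (cases x; cases y; cases z; auto)

lemma S_le_refl: "S_le x x"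
  by (cases x) auto

lemma S_le_trans': "\<forall>x y z. S_le x y \<longrightarrow> S_le y z \<longrightarrow> S_le x z"
  using S_le_trans by blast

lemma persist:
  assumes up: "\<forall>n. upset W R (V n)"
    and tr: "\<forall>x y z. R x y \<longrightarrow> R y z \<longrightarrow> R x z"
  shows "w \<in> W \<Longrightarrow> v \<in> W \<Longrightarrow> R w v \<Longrightarrow> forces W R V w A \<Longrightarrow> forces W R V v A"
proof (induction A arbitrary: w v)
  case (Var n)
  then have "w \<in> V n" by simp
  then have "v \<in> V n" using up Var.prems unfolding upset_def by blast
  then show ?case by simp
next
  case (Imp A B)
  then show ?case using tr by (simp (no_asm_use)) blast
qed auto

lemma subst_forces:
  "w \<in> W \<Longrightarrow> forces W R V w (subst s A) = forces W R (\<lambda>n. {v\<in>W. forces W R V v (s n)}) w A"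
  by (induction A arbitrary: w) auto

lemma valid_subst:
  assumes tr: "\<forall>x y z. R x y \<longrightarrow> R y z \<longrightarrow> R x z"
    and v: "valid_on W R A"
  shows "valid_on W R (subst s A)"
  unfolding valid_on_def
proof (intro allI impI ballI)
  fix V :: "nat \<Rightarrow> 'a set" and w assume up: "\<forall>n. upset W R (V n)" and w: "w \<in> W"
  have "\<forall>n. upset W R {v\<in>W. forces W R V v (s n)}"
    using persist[OF up tr] by (auto simp: upset_def)
  moreover have "(\<forall>n. upset W R ((\<lambda>n. {v\<in>W. forces W R V v (s n)}) n)) \<longrightarrow> (\<forall>w\<in>W. forces W R (\<lambda>n. {v\<in>W. forces W R V v (s n)}) w A)"
    using v unfolding valid_on_def by (rule spec)
  ultimately have "forces W R (\<lambda>n. {v\<in>W. forces W R V v (s n)}) w A"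
    using w by blast
  then show "forces W R V w (subst s A)" using subst_forces[OF w] by simp
qed

lemma ipc_valid:
  assumes up: "\<forall>n. upset W R (V n)"
    and tr: "\<forall>x y z. R x y \<longrightarrow> R y z \<longrightarrow> R x z"
    and rf: "\<And>x. R x x"
    and ax: "ipc_axiom A" and w: "w \<in> W"
  shows "forces W R V w A"
  using ax
proof cases
  case (1 A B)
  have P: "\<And>w v. w\<in>W \<Longrightarrow> v\<in>W \<Longrightarrow> R w v \<Longrightarrow> forces W R V w A \<Longrightarrow> forces W R V v A"
    using persist[OF up tr] by blast
  show ?thesis unfolding 1 forces.simps using P by blast
next
  case (2 A B C)
  show ?thesis unfolding 2 forces.simps
  proof (intro ballI impI)
    fix v u x assume v: "v \<in> W" "R w v" and h1: "\<forall>y\<in>W. R v y \<longrightarrow> forces W R V y A \<longrightarrow> (\<forall>z\<in>W. R y z \<longrightarrow> forces W R V z B \<longrightarrow> forces W R V z C)"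
      and u: "u \<in> W" "R v u" and h2: "\<forall>y\<in>W. R u y \<longrightarrow> forces W R V y A \<longrightarrow> forces W R V y B"
      and x: "x \<in> W" "R u x" and a: "forces W R V x A"
    have vx: "R v x" using tr u(2) x(2) by blast
    have b: "forces W R V x B" using h2 x a by blast
    show "forces W R V x C" using h1 x(1) vx a b rf by blast
  qed
next
  case (8 A C B)
  show ?thesis unfolding 8 forces.simps
  proof (intro ballI impI)
    fix v u x assume v: "v \<in> W" "R w v" and h1: "\<forall>y\<in>W. R v y \<longrightarrow> forces W R V y A \<longrightarrow> forces W R V y C"
      and u: "u \<in> W" "R v u" and h2: "\<forall>y\<in>W. R u y \<longrightarrow> forces W R V y B \<longrightarrow> forces W R V y C"
      and x: "x \<in> W" "R u x" and a: "forces W R V x A \<or> forces W R V x B"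
    have vx: "R v x" using tr u(2) x(2) by blast
    show "forces W R V x C" using h1 h2 x vx a by blast
  qed
next
  case (9 A) then show ?thesis by simp
next
  case (3 A B) then show ?thesis by simp
next
  case (4 A B) then show ?thesis by simp
next
  case (5 A B)
  have P: "\<And>w v. w\<in>W \<Longrightarrow> v\<in>W \<Longrightarrow> R w v \<Longrightarrow> forces W R V w A \<Longrightarrow> forces W R V v A"
    using persist[OF up tr] by blast
  show ?thesis unfolding 5 forces.simps using P by blast
next
  case (6 A B) then show ?thesis by simp
next
  case (7 A B) then show ?thesis by simp
qed

lemma S_incomp:
  "\<not> S_le x y \<Longrightarrow> \<not> S_le y x \<Longrightarrow> \<exists>j a. x = Lay j a \<and> y = Lay j (\<not> a)"
  by (cases x; cases y; auto)

lemma wPL_valid: "valid_on (S_carrier n) S_le wPL_ax"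
  unfolding valid_on_def wPL_ax_def
proof (intro allI impI ballI)
  fix V :: "nat \<Rightarrow> spt set" and w assume up: "\<forall>k. upset (S_carrier n) S_le (V k)" and w: "w \<in> S_carrier n"
  let ?W = "S_carrier n"
  have P: "\<And>u v u''. S_le u u'' \<Longrightarrow> u \<noteq> u'' \<Longrightarrow> S_le u v \<or> S_le u'' v \<or> S_le v u''"
    apply (case_tac u; case_tac v; case_tac u'')
    by auto
  show "forces ?W S_le V w (Or (Imp (Var 1) (Var 0)) (Imp (Imp (Imp (Var 0) (Var 1)) (Var 0)) (Var 0)))"
  proof (rule ccontr)
    assume "\<not> ?thesis"
    then obtain v u where v: "v \<in> ?W" "S_le w v" "v \<in> V 1" "v \<notin> V 0"
      and u: "u \<in> ?W" "S_le w u" "forces ?W S_le V u (Imp (Imp (Var 0) (Var 1)) (Var 0))" "u \<notin> V 0"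
      by auto
    have "\<not> forces ?W S_le V u (Imp (Var 0) (Var 1))"
      using u S_le_refl by auto
    then obtain u'' where u'': "u'' \<in> ?W" "S_le u u''" "u'' \<in> V 0" "u'' \<notin> V 1" by auto
    have "u \<noteq> u''" using u u'' by auto
    then have "S_le u v \<or> S_le u'' v \<or> S_le v u''" using P u'' by blast
    moreover
    { assume uv: "S_le u v"
      have "forces ?W S_le V v (Imp (Imp (Var 0) (Var 1)) (Var 0))"
        using persist[OF up S_le_trans' u(1) v(1) uv u(3)] .
      moreover have "forces ?W S_le V v (Imp (Var 0) (Var 1))"
        using v up unfolding upset_def by auto
      ultimately have False using v S_le_refl by auto }
    moreover
    { assume "S_le u'' v" then have False using up u'' v unfolding upset_def by blast }
    moreover
    { assume "S_le v u''" then have False using up u'' v unfolding upset_def by blast }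
    ultimately show False by blast
  qed
qed

lemma bw2_valid: "valid_on (S_carrier n) S_le bw2_ax"
  unfolding valid_on_def bw2_ax_def
proof (intro allI impI ballI)
  fix V :: "nat \<Rightarrow> spt set" and w assume up: "\<forall>k. upset (S_carrier n) S_le (V k)" and w: "w \<in> S_carrier n"
  let ?W = "S_carrier n"
  show "forces ?W S_le V w (Or (Imp (Var 0) (Or (Var 1) (Var 2)))
              (Or (Imp (Var 1) (Or (Var 0) (Var 2)))
                  (Imp (Var 2) (Or (Var 0) (Var 1)))))"
  proof (rule ccontr)
    assume "\<not> ?thesis"
    then obtain x y z where
      x: "x \<in> V 0" "x \<notin> V 1" "x \<notin> V 2" and
      y: "y \<in> V 1" "y \<notin> V 0" "y \<notin> V 2" and
      z: "z \<in> V 2" "z \<notin> V 0" "z \<notin> V 1" and W: "x \<in> ?W" "y \<in> ?W" "z \<in> ?W"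
      by auto
    have nle: "\<And>a b k. a \<in> V k \<Longrightarrow> b \<in> ?W \<Longrightarrow> b \<notin> V k \<Longrightarrow> \<not> S_le a b"
      using up unfolding upset_def by blast
    have h: "\<not> S_le x y" "\<not> S_le y x" "\<not> S_le x z" "\<not> S_le z x" "\<not> S_le y z" "\<not> S_le z y"
      using nle x y z W by blast+
    obtain j a where 1: "x = Lay j a" "y = Lay j (\<not> a)" using S_incomp[OF h(1,2)] by blast
    obtain j' a' where 2: "x = Lay j' a'" "z = Lay j' (\<not> a')" using S_incomp[OF h(3,4)] by blast
    have "y = z" using 1 2 by simp
    then show False using h(5) S_le_refl by simp
  qed
qed

lemma wem_valid: "valid_on (S_carrier n) S_le wem_ax"
  unfolding valid_on_def wem_ax_def Neg_def
proof (intro allI impI ballI)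
  fix V :: "nat \<Rightarrow> spt set" and w assume up: "\<forall>k. upset (S_carrier n) S_le (V k)" and w: "w \<in> S_carrier n"
  have T: "Tau \<in> S_carrier n" by (simp add: S_carrier_def)
  have ST: "\<And>v. S_le v Tau" by (case_tac v) auto
  show "forces (S_carrier n) S_le V w (Or (Imp (Var 0) Bot) (Imp (Imp (Var 0) Bot) Bot))"
  proof (cases "Tau \<in> V 0")
    case True
    have "forces (S_carrier n) S_le V w (Imp (Imp (Var 0) Bot) Bot)"
      unfolding forces.simps using T ST True by blast
    then show ?thesis by simp
  next
    case False
    have "v \<notin> V 0" if "v \<in> S_carrier n" for v
    proof
      assume "v \<in> V 0"
      then have "Tau \<in> V 0" using up T ST unfolding upset_def by blast
      then show False using False by simp
    qed
    then have "forces (S_carrier n) S_le V w (Imp (Var 0) Bot)"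
      by simp
    then show ?thesis by simp
  qed
qed

definition G0 :: "form set" where "G0 = {wPL_ax, bw2_ax, wem_ax}"

lemma soundness: "in_ext G0 A \<Longrightarrow> valid_on (S_carrier n) S_le A"
proof (induction rule: in_ext.induct)
  case (ax A)
  show ?case unfolding valid_on_def
  proof (intro allI impI ballI)
    fix V :: "nat \<Rightarrow> spt set" and w assume "\<forall>k. upset (S_carrier n) S_le (V k)" "w \<in> S_carrier n"
    then show "forces (S_carrier n) S_le V w A"
      using ipc_valid[OF _ S_le_trans' S_le_refl ax.hyps] by blast
  qed
next
  case (hyp A s)
  then have "valid_on (S_carrier n) S_le A"
    using wPL_valid bw2_valid wem_valid unfolding G0_def by blast
  then show ?case using valid_subst[OF S_le_trans'] by blast
next
  case (mp A B)
  show ?case unfolding valid_on_def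
  proof (intro allI impI ballI)
    fix V :: "nat \<Rightarrow> spt set" and w assume h: "\<forall>k. upset (S_carrier n) S_le (V k)" "w \<in> S_carrier n"
    have 1: "forces (S_carrier n) S_le V w (Imp A B)" using mp.IH(1) h unfolding valid_on_def by blast
    have 2: "forces (S_carrier n) S_le V w A" using mp.IH(2) h unfolding valid_on_def by blast
    show "forces (S_carrier n) S_le V w B" using 1 2 h(2) S_le_refl by simp
  qed
qed

section \<open>Derivability from hypotheses\<close>

inductive der :: "form set \<Rightarrow> form \<Rightarrow> bool" for \<Gamma> where
  dthm: "in_ext G0 A \<Longrightarrow> der \<Gamma> A"
| dasm: "A \<in> \<Gamma> \<Longrightarrow> der \<Gamma> A"
| dmp: "der \<Gamma> (Imp A B) \<Longrightarrow> der \<Gamma> A \<Longrightarrow> der \<Gamma> B"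

lemma dax: "ipc_axiom A \<Longrightarrow> der \<Gamma> A"
  by (rule dthm, rule in_ext.ax)

lemma der_mono: "der \<Gamma> A \<Longrightarrow> \<Gamma> \<subseteq> \<Delta> \<Longrightarrow> der \<Delta> A"
  by (induction rule: der.induct) (auto intro: der.intros)

lemma der_trans: "der \<Delta> B \<Longrightarrow> (\<forall>A\<in>\<Delta>. der \<Gamma> A) \<Longrightarrow> der \<Gamma> B"
  by (induction rule: der.induct) (auto intro: der.intros)

lemma dK: "der \<Gamma> B \<Longrightarrow> der \<Gamma> (Imp A B)"
  by (rule dmp[OF dax[OF ipc_axiom.intros(1)]])

lemma dS: "der \<Gamma> (Imp A (Imp B C)) \<Longrightarrow> der \<Gamma> (Imp A B) \<Longrightarrow> der \<Gamma> (Imp A C)"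
  by (rule dmp[OF dmp[OF dax[OF ipc_axiom.intros(2)]]])

lemma der_id: "der \<Gamma> (Imp A A)"
proof -
  have 2: "der \<Gamma> (Imp A (Imp (Imp A A) A))" by (rule dax) (rule ipc_axiom.intros)
  have 3: "der \<Gamma> (Imp A (Imp A A))" by (rule dax) (rule ipc_axiom.intros)
  show ?thesis using dS[OF 2 3] .
qed

lemma deduction: "der (insert A \<Gamma>) B \<Longrightarrow> der \<Gamma> (Imp A B)"
proof (induction rule: der.induct)
  case (dthm B)
  then show ?case by (intro dK der.dthm)
next
  case (dasm B)
  then show ?case using der_id dK der.dasm by (metis insert_iff)
next
  case (dmp B C)
  then show ?case using dS by blast
qed

lemma impE': "der \<Gamma> (Imp A B) \<Longrightarrow> der (insert A \<Gamma>) B"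
  by (rule dmp[OF der_mono[of \<Gamma>]]) (auto intro: dasm)

lemma andI: "der \<Gamma> A \<Longrightarrow> der \<Gamma> B \<Longrightarrow> der \<Gamma> (And A B)"
  by (rule dmp[OF dmp[OF dax[OF ipc_axiom.intros(5)]]])

lemma andE1: "der \<Gamma> (And A B) \<Longrightarrow> der \<Gamma> A"
  by (rule dmp[OF dax[OF ipc_axiom.intros(3)]])

lemma andE2: "der \<Gamma> (And A B) \<Longrightarrow> der \<Gamma> B"
  by (rule dmp[OF dax[OF ipc_axiom.intros(4)]])

lemma orI1: "der \<Gamma> A \<Longrightarrow> der \<Gamma> (Or A B)"
  by (rule dmp[OF dax[OF ipc_axiom.intros(6)]])

lemma orI2: "der \<Gamma> B \<Longrightarrow> der \<Gamma> (Or A B)"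
  by (rule dmp[OF dax[OF ipc_axiom.intros(7)]])

lemma orE: "der \<Gamma> (Or A B) \<Longrightarrow> der (insert A \<Gamma>) C \<Longrightarrow> der (insert B \<Gamma>) C \<Longrightarrow> der \<Gamma> C"
  by (rule dmp[OF dmp[OF dmp[OF dax[OF ipc_axiom.intros(8)]]]]) (auto intro: deduction)

lemma botE: "der \<Gamma> Bot \<Longrightarrow> der \<Gamma> A"
  by (rule dmp[OF dax[OF ipc_axiom.intros(9)]])

lemma der_finite: "der \<Gamma> A \<Longrightarrow> \<exists>F. finite F \<and> F \<subseteq> \<Gamma> \<and> der F A"
proof (induction rule: der.induct)
  case (dthm A)
  then show ?case by (intro exI[of _ "{}"]) (auto intro: der.dthm)
next
  case (dasm A)
  then show ?case by (intro exI[of _ "{A}"]) (auto intro: der.dasm)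
next
  case (dmp A B)
  then obtain F1 F2 where "finite F1" "F1 \<subseteq> \<Gamma>" "der F1 (Imp A B)" "finite F2" "F2 \<subseteq> \<Gamma>" "der F2 A"
    by blast
  then show ?case
    by (intro exI[of _ "F1 \<union> F2"]) (meson der.dmp der_mono finite_UnI le_sup_iff sup_ge1 sup_ge2)
qed

lemma der_empty: "der {} A \<Longrightarrow> in_ext G0 A"
  by (induction rule: der.induct) (auto intro: in_ext.mp)

section \<open>Prime theories\<close>

definition closed :: "form set \<Rightarrow> bool" where
  "closed T \<longleftrightarrow> (\<forall>A. der T A \<longrightarrow> A \<in> T)"

definition ptheory :: "form set \<Rightarrow> bool" where
  "ptheory T \<longleftrightarrow> closed T \<and> Bot \<notin> T \<and> (\<forall>A B. Or A B \<in> T \<longrightarrow> A \<in> T \<or> B \<in> T)"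

definition pointed :: "form set \<Rightarrow> bool" where
  "pointed T \<longleftrightarrow> (\<exists>D. D \<notin> T \<and> (\<forall>T'. ptheory T' \<longrightarrow> T \<subset> T' \<longrightarrow> D \<in> T'))"

lemma closed_der: "closed {A. der \<Gamma> A}"
  unfolding closed_def using der_trans[of _ _ \<Gamma>] by (simp add: der.dasm)

lemma lind:
  assumes nd: "\<not> der \<Gamma> \<phi>"
  shows "\<exists>T. ptheory T \<and> \<Gamma> \<subseteq> T \<and> \<phi> \<notin> T \<and> (\<forall>T'. closed T' \<longrightarrow> T \<subset> T' \<longrightarrow> \<phi> \<in> T')"
proof -
  define A where "A = {T. closed T \<and> \<Gamma> \<subseteq> T \<and> \<phi> \<notin> T}"
  have inA: "T \<in> A \<longleftrightarrow> closed T \<and> \<Gamma> \<subseteq> T \<and> \<phi> \<notin> T" for T unfolding A_def by simp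
  have "\<forall>C\<in>chains A. \<exists>U\<in>A. \<forall>X\<in>C. X \<subseteq> U"
  proof
    fix C assume C: "C \<in> chains A"
    show "\<exists>U\<in>A. \<forall>X\<in>C. X \<subseteq> U"
    proof (cases "C = {}")
      case True
      have "\<Gamma> \<subseteq> {A. der \<Gamma> A}" by (auto intro: dasm)
      then have "{A. der \<Gamma> A} \<in> A" unfolding inA using closed_der nd by simp
      then show ?thesis using True by (intro bexI) auto
    next
      case False
      have sub: "C \<subseteq> A" using C chainsD2 by blast
      have ch: "subset.chain A C" using C by (simp add: chains_alt_def)
      have "closed (\<Union>C)" unfolding closed_def
      proof (intro allI impI)
        fix B assume "der (\<Union>C) B"
        then obtain F where F: "finite F" "F \<subseteq> \<Union>C" "der F B" using der_finite by blast
        then obtain X where X: "X \<in> C" "F \<subseteq> X" using finite_subset_Union_chain[OF F(1) F(2) False ch] by blast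
        then have "der X B" using der_mono F(3) by blast
        moreover have "closed X" using sub X(1) inA by blast
        ultimately have "B \<in> X" unfolding closed_def by blast
        then show "B \<in> \<Union>C" using X(1) by blast
      qed
      moreover obtain X0 where "X0 \<in> C" using False by blast
      then have "\<Gamma> \<subseteq> \<Union>C" using sub inA by blast
      moreover have "\<phi> \<notin> \<Union>C" using sub inA by blast
      ultimately have "\<Union>C \<in> A" using inA by blast
      then show ?thesis by (intro bexI[of _ "\<Union>C"]) auto
    qed
  qed
  then obtain M where M: "M \<in> A" and max: "\<forall>X\<in>A. M \<subseteq> X \<longrightarrow> X = M"
    using Zorn_Lemma2[of A] by blast
  have Mc: "closed M" and MG: "\<Gamma> \<subseteq> M" and Mp: "\<phi> \<notin> M" using M inA by blast+
  have mx: "\<phi> \<in> T'" if "closed T'" "M \<subset> T'" for T'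
  proof (rule ccontr)
    assume "\<phi> \<notin> T'"
    then have "T' \<in> A" using that MG inA by blast
    then show False using max that by blast
  qed
  have ext: "der (insert B M) \<phi>" if "B \<notin> M" for B
  proof -
    have "closed {X. der (insert B M) X}" by (rule closed_der)
    moreover have "M \<subset> {X. der (insert B M) X}" using that by (auto intro: dasm)
    ultimately show ?thesis using mx by blast
  qed
  have "Bot \<notin> M"
  proof
    assume "Bot \<in> M"
    then have "der M \<phi>" by (rule botE[OF dasm])
    then show False using Mc Mp unfolding closed_def by blast
  qed
  moreover have "B \<in> M \<or> C \<in> M" if "Or B C \<in> M" for B C
  proof (rule ccontr)
    assume "\<not> (B \<in> M \<or> C \<in> M)"
    then have "der M \<phi>" using orE[OF dasm[OF that] ext ext] by blast
    then show False using Mc Mp unfolding closed_def by blast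
  qed
  ultimately have "ptheory M" using Mc unfolding ptheory_def by blast
  then show ?thesis using MG Mp mx by blast
qed

lemma pt_closed: "ptheory T \<Longrightarrow> der T A \<Longrightarrow> A \<in> T"
  unfolding ptheory_def closed_def by blast

lemma pt_thm: "ptheory T \<Longrightarrow> in_ext G0 A \<Longrightarrow> A \<in> T"
  by (blast intro: pt_closed dthm)

lemma pt_and: "ptheory T \<Longrightarrow> And A B \<in> T \<longleftrightarrow> A \<in> T \<and> B \<in> T"
  by (meson andE1 andE2 andI dasm pt_closed)

lemma pt_or: "ptheory T \<Longrightarrow> Or A B \<in> T \<longleftrightarrow> A \<in> T \<or> B \<in> T"
  unfolding ptheory_def by (meson closed_def dasm orI1 orI2)

lemma pt_mp: "ptheory T \<Longrightarrow> Imp A B \<in> T \<Longrightarrow> A \<in> T \<Longrightarrow> B \<in> T"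
  by (meson dasm dmp pt_closed)

lemma pt_K: "ptheory T \<Longrightarrow> B \<in> T \<Longrightarrow> Imp A B \<in> T"
  by (meson dasm dK pt_closed)

lemma pt_bot: "ptheory T \<Longrightarrow> Bot \<notin> T"
  unfolding ptheory_def by blast

lemma pt_wit:
  assumes "ptheory T" "Imp A B \<notin> T"
  shows "\<exists>T'. ptheory T' \<and> pointed T' \<and> T \<subseteq> T' \<and> A \<in> T' \<and> B \<notin> T'"
proof -
  have "\<not> der (insert A T) B" using assms deduction pt_closed by blast
  then obtain T' where "ptheory T'" "insert A T \<subseteq> T'" "B \<notin> T'" "\<forall>T''. closed T'' \<longrightarrow> T' \<subset> T'' \<longrightarrow> B \<in> T''"
    using lind by blast
  then show ?thesis unfolding pointed_def ptheory_def by blast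
qed

lemma pt_inst: "ptheory T \<Longrightarrow> A \<in> G0 \<Longrightarrow> subst s A \<in> T"
  by (blast intro: pt_thm in_ext.hyp)

lemma wpl_inst: "ptheory T \<Longrightarrow> Or (Imp q p) (Imp (Imp (Imp p q) p) p) \<in> T"
  using pt_inst[of T wPL_ax "\<lambda>n. if n = 0 then p else q"] by (simp add: G0_def wPL_ax_def)

lemma bw2_inst: "ptheory T \<Longrightarrow> Or (Imp a (Or b c)) (Or (Imp b (Or a c)) (Imp c (Or a b))) \<in> T"
  using pt_inst[of T bw2_ax "\<lambda>n. if n = 0 then a else if n = 1 then b else c"] by (simp add: G0_def bw2_ax_def)

lemma wem_inst: "ptheory T \<Longrightarrow> Or (Imp a Bot) (Imp (Imp a Bot) Bot) \<in> T"
  using pt_inst[of T wem_ax "\<lambda>n. a"] by (simp add: G0_def wem_ax_def Neg_def)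

lemma wpl_frame:
  assumes w: "ptheory w" and u: "ptheory u" and v: "ptheory v" and u2: "ptheory u2"
    and wu: "w \<subseteq> u" and wv: "w \<subseteq> v" and D: "D \<notin> u" "\<forall>T'. ptheory T' \<longrightarrow> u \<subset> T' \<longrightarrow> D \<in> T'"
    and nuv: "\<not> u \<subseteq> v" and uu2: "u \<subset> u2"
  shows "v \<subseteq> u2"
proof (rule ccontr)
  assume "\<not> v \<subseteq> u2"
  then obtain c where c: "c \<in> v" "c \<notin> u2" by blast
  obtain a where a: "a \<in> u" "a \<notin> v" using nuv by blast
  define p where "p = And D a"
  have "Or (Imp c p) (Imp (Imp (Imp p c) p) p) \<in> w" using wpl_inst[OF w] .
  then have "Imp c p \<in> w \<or> Imp (Imp (Imp p c) p) p \<in> w" using pt_or[OF w] by blast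
  then show False
  proof
    assume "Imp c p \<in> w"
    then have "p \<in> v" using wv c(1) pt_mp[OF v] by blast
    then show False using a pt_and[OF v] p_def by simp
  next
    assume h: "Imp (Imp (Imp p c) p) p \<in> w"
    have pu: "p \<notin> u" using D(1) pt_and[OF u] p_def by simp
    have "Imp (Imp (Imp p c) p) p \<in> u" using h wu by blast
    then have "Imp (Imp p c) p \<notin> u" using pt_mp[OF u] pu by blast
    then obtain u' where u': "ptheory u'" "u \<subseteq> u'" "Imp p c \<in> u'" "p \<notin> u'"
      using pt_wit[OF u] by blast
    have "u' = u"
    proof (rule ccontr)
      assume "u' \<noteq> u"
      then have "u \<subset> u'" using u'(2) by blast
      then have "D \<in> u'" using D(2) u'(1) by blast
      moreover have "a \<in> u'" using a u' by blast
      ultimately have "p \<in> u'" using pt_and[OF u'(1)] p_def by simp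
      then show False using u' by blast
    qed
    then have "Imp p c \<in> u2" using u' uu2 by blast
    moreover have "D \<in> u2" using D(2) u2 uu2 by blast
    moreover have "a \<in> u2" using a uu2 by blast
    ultimately have "c \<in> u2" using pt_mp[OF u2] pt_and[OF u2] p_def by simp
    then show False using c by blast
  qed
qed

lemma bw2_frame:
  assumes w: "ptheory w" and y1: "ptheory y1" and y2: "ptheory y2" and y3: "ptheory y3"
    and wy: "w \<subseteq> y1" "w \<subseteq> y2" "w \<subseteq> y3"
    and n: "\<not> y1 \<subseteq> y2" "\<not> y2 \<subseteq> y1" "\<not> y1 \<subseteq> y3" "\<not> y3 \<subseteq> y1" "\<not> y2 \<subseteq> y3" "\<not> y3 \<subseteq> y2"
  shows False
proof -
  obtain a12 where a12: "a12 \<in> y1" "a12 \<notin> y2" using n(1) by blast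
  obtain a13 where a13: "a13 \<in> y1" "a13 \<notin> y3" using n(3) by blast
  obtain a21 where a21: "a21 \<in> y2" "a21 \<notin> y1" using n(2) by blast
  obtain a23 where a23: "a23 \<in> y2" "a23 \<notin> y3" using n(5) by blast
  obtain a31 where a31: "a31 \<in> y3" "a31 \<notin> y1" using n(4) by blast
  obtain a32 where a32: "a32 \<in> y3" "a32 \<notin> y2" using n(6) by blast
  define a1 where "a1 = And a12 a13"
  define a2 where "a2 = And a21 a23"
  define a3 where "a3 = And a31 a32"
  have m1: "a1 \<in> y1" "a1 \<notin> y2" "a1 \<notin> y3"
    using a12 a13 pt_and[OF y1] pt_and[OF y2] pt_and[OF y3] a1_def by auto
  have m2: "a2 \<in> y2" "a2 \<notin> y1" "a2 \<notin> y3"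
    using a21 a23 pt_and[OF y1] pt_and[OF y2] pt_and[OF y3] a2_def by auto
  have m3: "a3 \<in> y3" "a3 \<notin> y1" "a3 \<notin> y2"
    using a31 a32 pt_and[OF y1] pt_and[OF y2] pt_and[OF y3] a3_def by auto
  have "Or (Imp a1 (Or a2 a3)) (Or (Imp a2 (Or a1 a3)) (Imp a3 (Or a1 a2))) \<in> w"
    using bw2_inst[OF w] .
  then have "Imp a1 (Or a2 a3) \<in> w \<or> Imp a2 (Or a1 a3) \<in> w \<or> Imp a3 (Or a1 a2) \<in> w"
    using pt_or[OF w] by blast
  moreover
  { assume "Imp a1 (Or a2 a3) \<in> w"
    then have "Or a2 a3 \<in> y1" using wy m1 pt_mp[OF y1] by blast
    then have False using m2 m3 pt_or[OF y1] by blast }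
  moreover
  { assume "Imp a2 (Or a1 a3) \<in> w"
    then have "Or a1 a3 \<in> y2" using wy m2 pt_mp[OF y2] by blast
    then have False using m1 m3 pt_or[OF y2] by blast }
  moreover
  { assume "Imp a3 (Or a1 a2) \<in> w"
    then have "Or a1 a2 \<in> y3" using wy m3 pt_mp[OF y3] by blast
    then have False using m1 m2 pt_or[OF y3] by blast }
  ultimately show False by blast
qed

lemma top_formula: "ptheory u \<Longrightarrow> Imp Bot Bot \<in> u"
  by (rule pt_thm[OF _ in_ext.ax[OF ipc_axiom.intros(9)]])

lemma der_split: "der (u \<union> v) \<phi> \<Longrightarrow> ptheory u \<Longrightarrow> \<exists>a\<in>u. der v (Imp a \<phi>)"
proof (induction rule: der.induct)
  case (dthm A)
  then show ?case using dK[OF der.dthm[OF dthm.hyps]] top_formula by blast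
next
  case (dasm A)
  show ?case
  proof (cases "A \<in> u")
    case True
    then show ?thesis using der_id by blast
  next
    case False
    then have "A \<in> v" using dasm.hyps by blast
    then show ?thesis using dK[OF der.dasm] top_formula[OF dasm.prems] by blast
  qed
next
  case (dmp A B)
  obtain a1 where a1: "a1 \<in> u" "der v (Imp a1 (Imp A B))" using dmp.IH(1) dmp.prems by blast
  obtain a2 where a2: "a2 \<in> u" "der v (Imp a2 A)" using dmp.IH(2) dmp.prems by blast
  let ?G = "insert (And a1 a2) v"
  have g: "der ?G (And a1 a2)" by (rule dasm) simp
  have "der ?G (Imp a1 (Imp A B))" using der_mono[OF a1(2)] by blast
  then have 1: "der ?G (Imp A B)" using der.dmp[OF _ andE1[OF g]] by blast
  have "der ?G (Imp a2 A)" using der_mono[OF a2(2)] by blast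
  then have 2: "der ?G A" using der.dmp[OF _ andE2[OF g]] by blast
  have "der v (Imp (And a1 a2) B)" using deduction der.dmp[OF 1 2] by blast
  moreover have "And a1 a2 \<in> u" using a1 a2 pt_and[OF dmp.prems] by blast
  ultimately show ?case by blast
qed

lemma wem_frame:
  assumes w: "ptheory w" and u: "ptheory u" and v: "ptheory v" and wu: "w \<subseteq> u" and wv: "w \<subseteq> v"
  shows "\<not> der (u \<union> v) Bot"
proof
  assume "der (u \<union> v) Bot"
  then obtain a where a: "a \<in> u" "der v (Imp a Bot)" using der_split u by blast
  then have na: "Imp a Bot \<in> v" using pt_closed[OF v] by blast
  have "Or (Imp a Bot) (Imp (Imp a Bot) Bot) \<in> w" using wem_inst[OF w] .
  then have "Imp a Bot \<in> w \<or> Imp (Imp a Bot) Bot \<in> w" using pt_or[OF w] by blast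
  then show False
  proof
    assume "Imp a Bot \<in> w"
    then have "Bot \<in> u" using wu a(1) pt_mp[OF u] by blast
    then show False using pt_bot[OF u] by blast
  next
    assume "Imp (Imp a Bot) Bot \<in> w"
    then have "Bot \<in> v" using wv na pt_mp[OF v] by blast
    then show False using pt_bot[OF v] by blast
  qed
qed

lemma top_ext:
  assumes w: "ptheory w" and u: "ptheory u" and v: "ptheory v" and wu: "w \<subseteq> u" and wv: "w \<subseteq> v"
  shows "\<exists>t. ptheory t \<and> u \<subseteq> t \<and> v \<subseteq> t \<and> (\<forall>B C. Imp B C \<notin> t \<longrightarrow> B \<in> t)"
proof -
  obtain t where t: "ptheory t" "u \<union> v \<subseteq> t" "\<forall>T'. closed T' \<longrightarrow> t \<subset> T' \<longrightarrow> Bot \<in> T'"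
    using lind[OF wem_frame[OF assms]] by blast
  have "B \<in> t" if h: "Imp B C \<notin> t" for B C
  proof -
    obtain T' where T': "ptheory T'" "t \<subseteq> T'" "B \<in> T'" using pt_wit[OF t(1) h] by blast
    have "T' = t"
    proof (rule ccontr)
      assume "T' \<noteq> t"
      then have "Bot \<in> T'" using t(3) T' unfolding ptheory_def by blast
      then show False using pt_bot[OF T'(1)] by blast
    qed
    then show ?thesis using T' by blast
  qed
  then show ?thesis using t by blast
qed

definition pts :: "form set \<times> form set \<Rightarrow> form set set" where "pts L = {fst L, snd L}"

locale bld =
  fixes Sig :: "form set" and w0 :: "form set"
  assumes finS: "finite Sig"
    and subI: "Imp B C \<in> Sig \<Longrightarrow> B \<in> Sig \<and> C \<in> Sig"
    and subA: "And B C \<in> Sig \<Longrightarrow> B \<in> Sig \<and> C \<in> Sig"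
    and subO: "Or B C \<in> Sig \<Longrightarrow> B \<in> Sig \<and> C \<in> Sig"
    and w0: "ptheory w0"
begin

definition good_pt where "good_pt T \<longleftrightarrow> ptheory T \<and> pointed T \<and> w0 \<subseteq> T"

definition layer where "layer a b \<longleftrightarrow> good_pt a \<and> good_pt b \<and> (a = b \<or> (\<not> a \<subseteq> b \<and> \<not> b \<subseteq> a))"

definition wok where "wok ls t j p \<longleftrightarrow> (\<forall>B C. Imp B C \<in> Sig \<longrightarrow> Imp B C \<notin> p \<longrightarrow>
   B \<in> p \<or> (\<exists>i<j. \<exists>q\<in>pts (ls!i). B \<in> q \<and> C \<notin> q) \<or> (B \<in> t \<and> C \<notin> t))"

definition good_list where "good_list ls t \<longleftrightarrow> ptheory t \<and> (\<forall>B C. Imp B C \<notin> t \<longrightarrow> B \<in> t) \<and>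
  (\<forall>j<length ls. \<forall>p\<in>pts (ls!j). ptheory p \<and> p \<subseteq> t \<and> wok ls t j p) \<and>
  (\<forall>i j. i < j \<longrightarrow> j < length ls \<longrightarrow> (\<forall>p\<in>pts (ls!j). \<forall>q\<in>pts (ls!i). p \<subseteq> q))"

definition above where "above a b ls t \<longleftrightarrow> good_list ls t \<and> a \<subseteq> t \<and> b \<subseteq> t \<and>
  (\<forall>j<length ls. \<forall>p\<in>pts (ls!j). a \<subseteq> p \<and> b \<subseteq> p) \<and> wok ls t (length ls) a \<and> wok ls t (length ls) b"

lemma wok_app: assumes "j \<le> length ls" "wok ls t j p" shows "wok (ls @ L) t j p"
  unfolding wok_def
proof (intro allI impI)
  fix B C assume BC: "Imp B C \<in> Sig" "Imp B C \<notin> p"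
  then have "B \<in> p \<or> (\<exists>i<j. \<exists>q\<in>pts (ls!i). B \<in> q \<and> C \<notin> q) \<or> (B \<in> t \<and> C \<notin> t)"
    using assms(2) unfolding wok_def by blast
  moreover have "\<And>i. i < j \<Longrightarrow> (ls @ L) ! i = ls ! i" using assms(1) by (simp add: nth_append)
  ultimately show "B \<in> p \<or> (\<exists>i<j. \<exists>q\<in>pts ((ls @ L)!i). B \<in> q \<and> C \<notin> q) \<or> (B \<in> t \<and> C \<notin> t)"
    by metis
qed

lemma above_ext:
  assumes ab: "above a b ls t" and pa: "ptheory a" "ptheory b"
  shows "good_list (ls @ [(a,b)]) t"
proof -
  let ?L = "ls @ [(a,b)]"
  have gl: "good_list ls t" and at: "a \<subseteq> t" "b \<subseteq> t"
    and sub: "\<forall>j<length ls. \<forall>p\<in>pts (ls!j). a \<subseteq> p \<and> b \<subseteq> p"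
    and wa: "wok ls t (length ls) a" "wok ls t (length ls) b"
    using ab unfolding above_def by blast+
  have nth1: "\<And>j. j < length ls \<Longrightarrow> ?L ! j = ls ! j" by (simp add: nth_append)
  have nth2: "?L ! length ls = (a,b)" by simp
  have P1: "ptheory p \<and> p \<subseteq> t \<and> wok ?L t j p" if j: "j < length ?L" and p: "p \<in> pts (?L!j)" for j p
  proof (cases "j < length ls")
    case True
    then have "p \<in> pts (ls!j)" using p nth1 by simp
    then show ?thesis using gl True wok_app[of j ls t p "[(a,b)]"] unfolding good_list_def by auto
  next
    case False
    then have "j = length ls" using j by simp
    then have "p = a \<or> p = b" and jj: "j = length ls" using p nth2 by (auto simp: pts_def)
    then show ?thesis using pa at wa wok_app[of j ls t _ "[(a,b)]"] by auto
  qed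
  have P2: "p \<subseteq> q" if ij: "i < j" "j < length ?L" and p: "p \<in> pts (?L!j)" and q: "q \<in> pts (?L!i)" for i j p q
  proof (cases "j < length ls")
    case True
    then show ?thesis using gl ij p q nth1 unfolding good_list_def by (metis less_trans)
  next
    case False
    then have "j = length ls" using ij by simp
    then have "p = a \<or> p = b" using p nth2 by (auto simp: pts_def)
    moreover have "i < length ls" using ij \<open>j = length ls\<close> by simp
    then have "q \<in> pts (ls!i)" using q nth1 by simp
    ultimately show ?thesis using sub \<open>i < length ls\<close> by blast
  qed
  have g: "ptheory t" "\<forall>B C. Imp B C \<notin> t \<longrightarrow> B \<in> t" using gl unfolding good_list_def by blast+
  show ?thesis unfolding good_list_def
    apply (intro conjI)
    subgoal using g(1) .
    subgoal using g(2) .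
    subgoal using P1 by blast
    subgoal using P2 by blast
    done
qed

definition mu where "mu a b = card (Sig - (a \<inter> b)) + card (Sig - (a \<union> b))"

lemma build: "layer a b \<Longrightarrow> \<exists>ls t. above a b ls t"
proof (induction "mu a b" arbitrary: a b rule: less_induct)
  case less
  have ga: "good_pt a" "good_pt b" and inc: "a = b \<or> (\<not> a \<subseteq> b \<and> \<not> b \<subseteq> a)"
    using less.prems unfolding layer_def by auto
  have pa: "ptheory a" "ptheory b" "w0 \<subseteq> a" "w0 \<subseteq> b" using ga unfolding good_pt_def by auto
  define Pd where "Pd = {(x,B,C). x \<in> {a,b} \<and> Imp B C \<in> Sig \<and> Imp B C \<notin> x \<and> B \<notin> x}"
  show ?case
  proof (cases "Pd = {}")
    case True
    obtain t where t: "ptheory t" "a \<subseteq> t" "b \<subseteq> t" "\<forall>B C. Imp B C \<notin> t \<longrightarrow> B \<in> t"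
      using top_ext[OF w0 pa(1,2,3,4)] by blast
    have "wok [] t 0 x" if xab: "x \<in> {a,b}" for x
      unfolding wok_def
    proof (intro allI impI)
      fix B C assume BC: "Imp B C \<in> Sig" "Imp B C \<notin> x"
      have "(x,B,C) \<notin> Pd" using True by simp
      then have "B \<in> x" using xab BC unfolding Pd_def by auto
      then show "B \<in> x \<or> (\<exists>i<0. \<exists>q\<in>pts ([]!i). B \<in> q \<and> C \<notin> q) \<or> (B \<in> t \<and> C \<notin> t)" by blast
    qed
    then have "above a b [] t" unfolding above_def good_list_def using t by auto
    then show ?thesis by blast
  next
    case False
    have "\<forall>q\<in>Pd. \<exists>y. good_pt y \<and> fst q \<subseteq> y \<and> fst (snd q) \<in> y \<and> snd (snd q) \<notin> y"
    proof
      fix q assume q: "q \<in> Pd"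
      obtain x B C where qq: "q = (x,B,C)" by (cases q) auto
      have x: "x \<in> {a,b}" "Imp B C \<notin> x" using q qq unfolding Pd_def by auto
      have px: "ptheory x" "w0 \<subseteq> x" using x(1) pa by auto
      obtain y where "ptheory y" "pointed y" "x \<subseteq> y" "B \<in> y" "C \<notin> y"
        using pt_wit[OF px(1) x(2)] by blast
      then show "\<exists>y. good_pt y \<and> fst q \<subseteq> y \<and> fst (snd q) \<in> y \<and> snd (snd q) \<notin> y"
        using qq px(2) unfolding good_pt_def by auto
    qed
    from bchoice[OF this] obtain wf where wf: "\<forall>q\<in>Pd. good_pt (wf q) \<and> fst q \<subseteq> wf q \<and> fst (snd q) \<in> wf q \<and> snd (snd q) \<notin> wf q"
      by blast
    define W where "W = wf ` Pd"
    have "Pd \<subseteq> {a,b} \<times> Sig \<times> Sig"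
    proof
      fix q assume "q \<in> Pd"
      then obtain x B C where "q = (x,B,C)" "x \<in> {a,b}" "Imp B C \<in> Sig" unfolding Pd_def by blast
      then show "q \<in> {a,b} \<times> Sig \<times> Sig" using subI[of B C] by blast
    qed
    then have finPd: "finite Pd" using finS by (meson finite.emptyI finite.insertI finite_SigmaI finite_subset)
    have finW: "finite W" unfolding W_def using finPd by simp
    have Wab: "a \<subseteq> z \<and> b \<subseteq> z \<and> good_pt z" if zW: "z \<in> W" for z
    proof -
      obtain x B C where q: "(x,B,C) \<in> Pd" "z = wf (x,B,C)" using zW unfolding W_def by auto
      have "good_pt (wf (x,B,C)) \<and> x \<subseteq> wf (x,B,C) \<and> B \<in> wf (x,B,C) \<and> C \<notin> wf (x,B,C)"
        using bspec[OF wf q(1)] by simp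
      then have z: "good_pt z" "x \<subseteq> z" "B \<in> z" "C \<notin> z" using q(2) by auto
      have x: "x \<in> {a,b}" "B \<notin> x" using q(1) unfolding Pd_def by auto
      have xz: "x \<subset> z" using z x by blast
      have pz: "ptheory z" using z unfolding good_pt_def by auto
      show ?thesis
      proof (cases "a = b")
        case True then show ?thesis using x xz z by auto
      next
        case False
        then have nab: "\<not> a \<subseteq> b" "\<not> b \<subseteq> a" using inc by auto
        show ?thesis
        proof (cases "x = a")
          case True
          obtain D where D: "D \<notin> a" "\<forall>T'. ptheory T' \<longrightarrow> a \<subset> T' \<longrightarrow> D \<in> T'"
            using ga(1) unfolding good_pt_def pointed_def by auto
          have "b \<subseteq> z" using wpl_frame[OF w0 pa(1) pa(2) pz pa(3) pa(4) D nab(1)] xz True by blast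
          then show ?thesis using xz True z by blast
        next
          case False
          then have xb: "x = b" using x by auto
          obtain D where D: "D \<notin> b" "\<forall>T'. ptheory T' \<longrightarrow> b \<subset> T' \<longrightarrow> D \<in> T'"
            using ga(2) unfolding good_pt_def pointed_def by auto
          have "a \<subseteq> z" using wpl_frame[OF w0 pa(2) pa(1) pz pa(4) pa(3) D nab(2)] xz xb by blast
          then show ?thesis using xz xb z by blast
        qed
      qed
    qed
    define Y where "Y = {y\<in>W. \<forall>z\<in>W. z \<subseteq> y \<longrightarrow> z = y}"
    have minY: "\<exists>y\<in>Y. y \<subseteq> z" if zW: "z \<in> W" for z
    proof -
      obtain m where "m \<in> W" "m \<subseteq> z" "\<forall>b\<in>W. b \<subseteq> m \<longrightarrow> m = b"
        using finite_has_minimal2[OF finW zW] by blast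
      then show ?thesis unfolding Y_def by blast
    qed
    have "W \<noteq> {}" using False unfolding W_def by auto
    then obtain y1 where y1: "y1 \<in> Y" using minY by blast
    have YW: "Y \<subseteq> W" unfolding Y_def by auto
    have incY: "\<And>y y'. y \<in> Y \<Longrightarrow> y' \<in> Y \<Longrightarrow> y \<subseteq> y' \<Longrightarrow> y = y'" unfolding Y_def by auto
    have gpY: "\<And>y. y \<in> Y \<Longrightarrow> good_pt y \<and> a \<subseteq> y \<and> b \<subseteq> y" using YW Wab by blast
    have gpY2: "\<And>y. y \<in> Y \<Longrightarrow> ptheory y \<and> w0 \<subseteq> y" using gpY unfolding good_pt_def by blast
    obtain y2 where y2: "y2 \<in> Y" and Ysub: "Y \<subseteq> {y1,y2}"
    proof (cases "Y \<subseteq> {y1}")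
      case True then show ?thesis using that[of y1] y1 by blast
    next
      case False
      then obtain y2 where y2: "y2 \<in> Y" "y2 \<noteq> y1" by blast
      have "Y \<subseteq> {y1,y2}"
      proof
        fix y3 assume y3: "y3 \<in> Y"
        show "y3 \<in> {y1,y2}"
        proof (rule ccontr)
          assume "y3 \<notin> {y1,y2}"
          then have ne: "y3 \<noteq> y1" "y3 \<noteq> y2" by auto
          have n: "\<not> y1 \<subseteq> y2" "\<not> y2 \<subseteq> y1" "\<not> y1 \<subseteq> y3" "\<not> y3 \<subseteq> y1" "\<not> y2 \<subseteq> y3" "\<not> y3 \<subseteq> y2"
            using incY y1 y2 y3 ne by metis+
          show False using bw2_frame[OF w0 _ _ _ _ _ _ n] gpY2 y1 y2(1) y3 by blast
        qed
      qed
      then show ?thesis using that y2 by blast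
    qed
    have lay: "layer y1 y2" unfolding layer_def using gpY y1 y2 incY by blast
    have mu_lt: "mu y1 y2 < mu a b"
    proof -
      have U: "a \<union> b \<subseteq> y1 \<inter> y2" using gpY y1 y2 by blast
      have s1: "Sig - (y1 \<inter> y2) \<subseteq> Sig - (a \<inter> b)" using U by blast
      have s2: "Sig - (y1 \<union> y2) \<subseteq> Sig - (a \<union> b)" using U by blast
      have s3: "Sig - (y1 \<inter> y2) \<subseteq> Sig - (a \<union> b)" using U by blast
      have s4: "Sig - (a \<union> b) \<subseteq> Sig - (a \<inter> b)" by blast
      obtain q0 where q0: "q0 \<in> Pd" "y1 = wf q0" using y1 YW unfolding W_def by blast
      obtain x B C where qq: "q0 = (x,B,C)" by (cases q0) auto
      have q: "(x,B,C) \<in> Pd" "y1 = wf (x,B,C)" using q0 qq by auto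
      have "B \<in> wf (x,B,C)" using bspec[OF wf q(1)] by simp
      then have B1: "B \<in> y1" using q(2) by simp
      have B2: "x \<in> {a,b}" "Imp B C \<in> Sig" "B \<notin> x" using q(1) unfolding Pd_def by auto
      have B: "B \<in> Sig" "B \<in> y1" "B \<notin> x" "x \<in> {a,b}" using B1 B2 subI[of B C] by auto
      have fin: "\<And>X. finite (Sig - X)" using finS by simp
      show ?thesis
      proof (cases "Sig - (y1 \<inter> y2) = Sig - (a \<inter> b)")
        case True
        then have eq: "Sig - (a \<union> b) = Sig - (a \<inter> b)" using s3 s4 by blast
        have "B \<in> Sig - (a \<inter> b)" using B by blast
        then have "B \<in> Sig - (a \<union> b)" using eq by simp
        moreover have "B \<notin> Sig - (y1 \<union> y2)" using B by blast
        ultimately have "Sig - (y1 \<union> y2) \<subset> Sig - (a \<union> b)" using s2 by blast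
        then have "card (Sig - (y1 \<union> y2)) < card (Sig - (a \<union> b))" using psubset_card_mono fin by blast
        then show ?thesis unfolding mu_def using True by simp
      next
        case False
        then have "Sig - (y1 \<inter> y2) \<subset> Sig - (a \<inter> b)" using s1 by blast
        then have "card (Sig - (y1 \<inter> y2)) < card (Sig - (a \<inter> b))" using psubset_card_mono fin by blast
        moreover have "card (Sig - (y1 \<union> y2)) \<le> card (Sig - (a \<union> b))" using s2 card_mono fin by blast
        ultimately show ?thesis unfolding mu_def by simp
      qed
    qed
    obtain ls t where IH: "above y1 y2 ls t" using less.hyps[OF mu_lt lay] by blast
    define ls2 where "ls2 = ls @ [(y1,y2)]"
    have gl: "good_list ls2 t" unfolding ls2_def using above_ext[OF IH] gpY2 y1 y2 by blast
    have IHd: "good_list ls t" "y1 \<subseteq> t" "y2 \<subseteq> t" "\<forall>j<length ls. \<forall>p\<in>pts (ls!j). y1 \<subseteq> p \<and> y2 \<subseteq> p"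
      "wok ls t (length ls) y1" "wok ls t (length ls) y2"
      using IH unfolding above_def by blast+
    have nth1: "\<And>j. j < length ls \<Longrightarrow> ls2 ! j = ls ! j" unfolding ls2_def by (simp add: nth_append)
    have nth2: "ls2 ! length ls = (y1,y2)" unfolding ls2_def by simp
    have len2: "length ls2 = Suc (length ls)" unfolding ls2_def by simp
    have sub2: "a \<subseteq> p \<and> b \<subseteq> p" if "j < length ls2" "p \<in> pts (ls2!j)" for j p
    proof (cases "j < length ls")
      case True
      then have "p \<in> pts (ls!j)" using that nth1 by simp
      then show ?thesis using IHd(4) True gpY y1 by blast
    next
      case False
      then have "j = length ls" using that len2 by simp
      then have "p = y1 \<or> p = y2" using that nth2 by (auto simp: pts_def)
      then show ?thesis using gpY y1 y2 by blast
    qed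
    have wokab: "wok ls2 t (length ls2) x" if xab: "x \<in> {a,b}" for x
      unfolding wok_def
    proof (intro allI impI)
      fix B C assume BC: "Imp B C \<in> Sig" "Imp B C \<notin> x"
      show "B \<in> x \<or> (\<exists>i<length ls2. \<exists>q\<in>pts (ls2!i). B \<in> q \<and> C \<notin> q) \<or> (B \<in> t \<and> C \<notin> t)"
      proof (cases "B \<in> x")
        case True then show ?thesis by blast
      next
        case False
        then have q: "(x,B,C) \<in> Pd" using xab BC unfolding Pd_def by auto
        let ?z = "wf (x,B,C)"
        have z: "?z \<in> W" "B \<in> ?z" "C \<notin> ?z" "good_pt ?z" using wf q unfolding W_def by auto
        obtain y where y: "y \<in> Y" "y \<subseteq> ?z" using minY z(1) by blast
        have yy: "y = y1 \<or> y = y2" using y Ysub by blast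
        have pz: "ptheory ?z" using z unfolding good_pt_def by blast
        have nI: "Imp B C \<notin> y"
        proof
          assume "Imp B C \<in> y"
          then have "Imp B C \<in> ?z" using y by blast
          then have "C \<in> ?z" using pt_mp[OF pz] z by blast
          then show False using z by blast
        qed
        have "wok ls t (length ls) y" using yy IHd by blast
        then have disj: "B \<in> y \<or> (\<exists>i<length ls. \<exists>q\<in>pts (ls!i). B \<in> q \<and> C \<notin> q) \<or> (B \<in> t \<and> C \<notin> t)"
          using BC(1) nI unfolding wok_def by blast
        have Cy: "C \<notin> y" using y z by blast
        have ypts: "y \<in> pts (ls2 ! length ls)" using yy nth2 by (auto simp: pts_def)
        show ?thesis
        proof -
          { assume "B \<in> y"
            then have ?thesis using Cy ypts len2 by (metis lessI) }
          moreover
          { assume "\<exists>i<length ls. \<exists>q\<in>pts (ls!i). B \<in> q \<and> C \<notin> q"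
            then obtain i q where "i < length ls" "q \<in> pts (ls!i)" "B \<in> q" "C \<notin> q" by blast
            then have "i < length ls2" "q \<in> pts (ls2 ! i)" "B \<in> q" "C \<notin> q" using nth1 len2 by auto
            then have ?thesis by blast }
          ultimately show ?thesis using disj by blast
        qed
      qed
    qed
    have at: "a \<subseteq> t" "b \<subseteq> t" using gpY[OF y1] IHd(2) by blast+
    have "above a b ls2 t" unfolding above_def
      apply (intro conjI)
      subgoal using gl .
      subgoal using at(1) .
      subgoal using at(2) .
      subgoal using sub2 by blast
      subgoal using wokab by blast
      subgoal using wokab by blast
      done
    then show ?thesis by blast
  qed
qed

end

fun sub :: "form \<Rightarrow> form set" where
  "sub (Var n) = {Var n}"
| "sub Bot = {Bot}"
| "sub (And a b) = insert (And a b) (sub a \<union> sub b)"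
| "sub (Or a b) = insert (Or a b) (sub a \<union> sub b)"
| "sub (Imp a b) = insert (Imp a b) (sub a \<union> sub b)"

lemma sub_fin: "finite (sub A)" by (induction A) auto
lemma sub_self: "A \<in> sub A" by (cases A) auto
lemma sub_trans: "B \<in> sub A \<Longrightarrow> sub B \<subseteq> sub A" by (induction A) auto
lemma sub_Imp: "Imp B C \<in> sub A \<Longrightarrow> B \<in> sub A \<and> C \<in> sub A"
  using sub_trans[of "Imp B C" A] sub_self[of B] sub_self[of C] by auto
lemma sub_And: "And B C \<in> sub A \<Longrightarrow> B \<in> sub A \<and> C \<in> sub A"
  using sub_trans[of "And B C" A] sub_self[of B] sub_self[of C] by auto
lemma sub_Or: "Or B C \<in> sub A \<Longrightarrow> B \<in> sub A \<and> C \<in> sub A"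
  using sub_trans[of "Or B C" A] sub_self[of B] sub_self[of C] by auto

definition fmap :: "(form set \<times> form set) list \<Rightarrow> form set \<Rightarrow> form set \<Rightarrow> spt \<Rightarrow> form set" where
  "fmap L r t x = (case x of Rho \<Rightarrow> r | Tau \<Rightarrow> t | Lay j c \<Rightarrow> (if c then fst (L!j) else snd (L!j)))"

lemma carrier_iff: "x \<in> S_carrier (Suc m) \<longleftrightarrow> x = Rho \<or> x = Tau \<or> (\<exists>j c. x = Lay j c \<and> j < m)"
  by (cases x) (auto simp: S_carrier_def)

context bld begin

lemma model:
  assumes gl: "good_list L t" and ne: "L \<noteq> []" and last: "L ! (length L - 1) = (r, r)"
  shows "\<exists>V. (\<forall>k. upset (S_carrier (Suc (length L))) S_le (V k)) \<and>
     (\<forall>\<phi>\<in>Sig. forces (S_carrier (Suc (length L))) S_le V Rho \<phi> \<longleftrightarrow> \<phi> \<in> r)"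
proof -
  define W where "W = S_carrier (Suc (length L))"
  define f where "f = fmap L r t"
  define V where "V = (\<lambda>k. {x\<in>W. Var k \<in> f x})"
  let ?m = "length L"
  have Wi: "x \<in> W \<longleftrightarrow> x = Rho \<or> x = Tau \<or> (\<exists>j c. x = Lay j c \<and> j < ?m)" for x
    unfolding W_def by (rule carrier_iff)
  have ptL: "ptheory p \<and> p \<subseteq> t \<and> wok L t j p" if "j < ?m" "p \<in> pts (L!j)" for j p
    using gl that unfolding good_list_def by blast
  have ordL: "p \<subseteq> q" if "i < j" "j < ?m" "p \<in> pts (L!j)" "q \<in> pts (L!i)" for i j p q
    using gl that unfolding good_list_def by blast
  have tt: "ptheory t" "\<forall>B C. Imp B C \<notin> t \<longrightarrow> B \<in> t" using gl unfolding good_list_def by blast+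
  have mpos: "?m - 1 < ?m" using ne by simp
  have rpts: "pts (L ! (?m - 1)) = {r}" using last by (simp add: pts_def)
  have inpts: "f (Lay j c) \<in> pts (L!j)" for j c unfolding f_def fmap_def pts_def by simp
  have fR: "f Rho = r" "f Tau = t" unfolding f_def fmap_def by simp_all
  have fLast: "f (Lay (?m - 1) True) = r" unfolding f_def fmap_def using last by simp
  have rp: "ptheory r \<and> r \<subseteq> t" using ptL[OF mpos] rpts by blast
  have fpt: "ptheory (f x) \<and> f x \<subseteq> t" if xW: "x \<in> W" for x
  proof -
    consider "x = Rho" | "x = Tau" | j c where "x = Lay j c" "j < ?m" using xW Wi by blast
    then show ?thesis
    proof cases
      case 1 then show ?thesis using rp fR by simp
    next
      case 2 then show ?thesis using tt fR by simp
    next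
      case 3 then show ?thesis using ptL inpts by blast
    qed
  qed
  have fmono: "f x \<subseteq> f y" if xy: "x \<in> W" "y \<in> W" "S_le x y" for x y
  proof -
    consider "x = Rho" | "x = Tau" | j c where "x = Lay j c" "j < ?m" using xy(1) Wi by blast
    then show ?thesis
    proof cases
      case 1
      consider "y = Rho" | "y = Tau" | i d where "y = Lay i d" "i < ?m" using xy(2) Wi by blast
      then show ?thesis
      proof cases
        case 1 then show ?thesis using \<open>x = Rho\<close> by simp
      next
        case 2 then show ?thesis using \<open>x = Rho\<close> fR rp by simp
      next
        case 3
        show ?thesis
        proof (cases "i = ?m - 1")
          case True
          then have "f y = r" using 3 inpts[of i d] rpts by auto
          then show ?thesis using \<open>x = Rho\<close> fR by simp
        next
          case False
          then have "i < ?m - 1" using 3 by simp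
          then have "r \<subseteq> f y" using ordL[OF _ mpos _ inpts[of i d]] rpts 3 by blast
          then show ?thesis using \<open>x = Rho\<close> fR by simp
        qed
      qed
    next
      case 2
      then have "y = Tau" using xy(3) by (cases y) auto
      then show ?thesis using 2 by simp
    next
      case 3
      consider "y = Rho" | "y = Tau" | i d where "y = Lay i d" "i < ?m" using xy(2) Wi by blast
      then show ?thesis
      proof cases
        case 1 then show ?thesis using 3 xy(3) by simp
      next
        case 2 then show ?thesis using fpt xy(1) fR by simp
      next
        case 4: 3
        have "(j = i \<and> c = d) \<or> i < j" using xy(3) 3 4 by simp
        then show ?thesis
        proof
          assume "j = i \<and> c = d" then show ?thesis using 3 4 by simp
        next
          assume "i < j" then show ?thesis using ordL[OF _ 3(2) inpts[of j c] inpts[of i d]] 3 4 by simp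
        qed
      qed
    qed
  qed
  have fwitL: "\<exists>y\<in>W. S_le (Lay j c) y \<and> B \<in> f y \<and> C \<notin> f y"
    if jc: "j < ?m" "Imp B C \<in> Sig" "Imp B C \<notin> f (Lay j c)" for j c B C
  proof -
    let ?p = "f (Lay j c)"
    have pp: "ptheory ?p" "wok L t j ?p" using ptL[OF jc(1) inpts] by blast+
    then have disj: "B \<in> ?p \<or> (\<exists>i<j. \<exists>q\<in>pts (L!i). B \<in> q \<and> C \<notin> q) \<or> (B \<in> t \<and> C \<notin> t)"
      using jc(2,3) unfolding wok_def by blast
    have LW: "Lay i d \<in> W" if "i < ?m" for i d using that Wi by blast
    have TW: "Tau \<in> W" using Wi by blast
    { assume B: "B \<in> ?p"
      have "C \<notin> ?p" using jc(3) pt_K[OF pp(1)] by blast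
      then have ?thesis using B LW[OF jc(1)] S_le_refl by blast }
    moreover
    { assume "\<exists>i<j. \<exists>q\<in>pts (L!i). B \<in> q \<and> C \<notin> q"
      then obtain i q where iq: "i < j" "q \<in> pts (L!i)" "B \<in> q" "C \<notin> q" by blast
      have "q = f (Lay i True) \<or> q = f (Lay i False)" using iq(2) unfolding f_def fmap_def pts_def by auto
      then obtain d where "q = f (Lay i d)" by blast
      moreover have "S_le (Lay j c) (Lay i d)" using iq(1) by simp
      moreover have "Lay i d \<in> W" using LW iq(1) jc(1) by simp
      ultimately have ?thesis using iq by blast }
    moreover
    { assume "B \<in> t \<and> C \<notin> t"
      moreover have "S_le (Lay j c) Tau" by simp
      ultimately have ?thesis using TW fR by metis }
    ultimately show ?thesis using disj by blast
  qed
  have fwit: "\<exists>y\<in>W. S_le x y \<and> B \<in> f y \<and> C \<notin> f y"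
    if xw: "x \<in> W" "Imp B C \<in> Sig" "Imp B C \<notin> f x" for x B C
  proof -
    consider "x = Rho" | "x = Tau" | j c where "x = Lay j c" "j < ?m" using xw(1) Wi by blast
    then show ?thesis
    proof cases
      case 1
      then have "Imp B C \<notin> f (Lay (?m - 1) True)" using xw(3) fR fLast by simp
      then obtain y where "y \<in> W" "B \<in> f y" "C \<notin> f y" using fwitL[OF mpos xw(2)] by blast
      moreover have "S_le x y" using 1 by simp
      ultimately show ?thesis by blast
    next
      case 2
      have "Imp B C \<notin> t" using xw(3) 2 fR by simp
      then have "B \<in> t" using tt(2) by blast
      moreover have "C \<notin> t" using xw(3) 2 fR pt_K[OF tt(1)] by auto
      moreover have "Tau \<in> W" using Wi by blast
      ultimately show ?thesis using 2 fR S_le_refl by metis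
    next
      case 3 then show ?thesis using fwitL xw by blast
    qed
  qed
  have up: "\<forall>k. upset W S_le (V k)"
    unfolding upset_def V_def using fmono by blast
  have truth: "forces W S_le V x \<phi> \<longleftrightarrow> \<phi> \<in> f x" if "\<phi> \<in> Sig" "x \<in> W" for \<phi> x
    using that
  proof (induction \<phi> arbitrary: x)
    case (Var n)
    have "x \<in> W" using Var.prems(2) .
    then show ?case unfolding V_def by simp
  next
    case Bot
    have "ptheory (f x)" using fpt Bot.prems(2) by blast
    then show ?case using pt_bot by simp
  next
    case (And B C)
    have BC: "B \<in> Sig" "C \<in> Sig" using subA And.prems(1) by blast+
    have p: "ptheory (f x)" using fpt And.prems(2) by blast
    show ?case using And.IH(1)[OF BC(1) And.prems(2)] And.IH(2)[OF BC(2) And.prems(2)] pt_and[OF p] by simp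
  next
    case (Or B C)
    have BC: "B \<in> Sig" "C \<in> Sig" using subO Or.prems(1) by blast+
    have p: "ptheory (f x)" using fpt Or.prems(2) by blast
    show ?case using Or.IH(1)[OF BC(1) Or.prems(2)] Or.IH(2)[OF BC(2) Or.prems(2)] pt_or[OF p] by simp
  next
    case (Imp B C)
    have BC: "B \<in> Sig" "C \<in> Sig" using subI Imp.prems(1) by blast+
    show ?case
    proof
      assume h: "forces W S_le V x (Imp B C)"
      show "Imp B C \<in> f x"
      proof (rule ccontr)
        assume "Imp B C \<notin> f x"
        then obtain y where y: "y \<in> W" "S_le x y" "B \<in> f y" "C \<notin> f y"
          using fwit Imp.prems(2) Imp.prems(1) by blast
        have "forces W S_le V y B" using Imp.IH(1)[OF BC(1) y(1)] y(3) by simp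
        then have "forces W S_le V y C" using h y(1,2) by simp
        then show False using Imp.IH(2)[OF BC(2) y(1)] y(4) by simp
      qed
    next
      assume h: "Imp B C \<in> f x"
      show "forces W S_le V x (Imp B C)"
        unfolding forces.simps
      proof (intro ballI impI)
        fix y assume y: "y \<in> W" "S_le x y" "forces W S_le V y B"
        have "B \<in> f y" using Imp.IH(1)[OF BC(1) y(1)] y(3) by simp
        moreover have "Imp B C \<in> f y" using h fmono[OF Imp.prems(2) y(1,2)] by blast
        ultimately have "C \<in> f y" using pt_mp fpt[OF y(1)] by blast
        then show "forces W S_le V y C" using Imp.IH(2)[OF BC(2) y(1)] by simp
      qed
    qed
  qed
  have RW: "Rho \<in> W" using Wi by blast
  show ?thesis
    using up truth[OF _ RW] fR unfolding W_def by (intro exI[of _ V]) auto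
qed

end

theorem mainTheorem14:
  shows "Box_logic = Log_S"
proof
  show "Box_logic \<subseteq> Log_S"
  proof
    fix A assume "A \<in> Box_logic"
    then have "in_ext G0 A" unfolding Box_logic_def ext_logic_def G0_def by simp
    then show "A \<in> Log_S" unfolding Log_S_def using soundness by blast
  qed
  show "Log_S \<subseteq> Box_logic"
  proof
    fix A assume A: "A \<in> Log_S"
    show "A \<in> Box_logic"
    proof (rule ccontr)
      assume nA: "A \<notin> Box_logic"
      have "\<not> der {} A"
      proof
        assume "der {} A"
        then have "in_ext G0 A" by (rule der_empty)
        then show False using nA unfolding Box_logic_def ext_logic_def G0_def by simp
      qed
      then obtain w0 where w0: "ptheory w0" "A \<notin> w0" "\<forall>T'. closed T' \<longrightarrow> w0 \<subset> T' \<longrightarrow> A \<in> T'"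
        using lind by blast
      interpret B: bld "sub A" w0
        using sub_fin sub_Imp sub_And sub_Or w0(1) by unfold_locales blast+
      have pw: "pointed w0" unfolding pointed_def using w0 unfolding ptheory_def by blast
      have "B.layer w0 w0" unfolding B.layer_def B.good_pt_def using w0 pw by blast
      then obtain ls t where ab: "B.above w0 w0 ls t" using B.build by blast
      let ?L = "ls @ [(w0,w0)]"
      have gl: "B.good_list ?L t" using B.above_ext[OF ab w0(1) w0(1)] .
      have last: "?L ! (length ?L - 1) = (w0,w0)" by simp
      obtain V where V: "\<forall>k. upset (S_carrier (Suc (length ?L))) S_le (V k)"
        "\<forall>\<phi>\<in>sub A. forces (S_carrier (Suc (length ?L))) S_le V Rho \<phi> \<longleftrightarrow> \<phi> \<in> w0"
        using B.model[OF gl _ last] by auto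
      have "Suc (length ?L) \<ge> 2" by simp
      then have "valid_on (S_carrier (Suc (length ?L))) S_le A" using A unfolding Log_S_def by blast
      moreover have "Rho \<in> S_carrier (Suc (length ?L))" by (simp add: S_carrier_def)
      ultimately have "forces (S_carrier (Suc (length ?L))) S_le V Rho A"
        using V(1) unfolding valid_on_def by blast
      then show False using V(2) sub_self w0(2) by blast
    qed
  qed
qed

end
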